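(* There exist an odd integer $m\ge 3$, a positive integer $n$, and a nonzero, non-symmetric tensor $\mathbb{A}\in T_{m,n}$ that is a $P_0$ tensor.
   Context: $T_{m,n}$ denotes the set of real $m$th order $n$-dimensional tensors $\mathbb{A}=(a_{i_1i_2\ldots i_m})$ with $i_j\in[n]=\{1,\ldots,n\}$. A tensor is symmetric if its entries are invariant under any permutation of the indices. For $x\in\mathbb{R}^n$, $(\mathbb{A}x^{m-1})_i=\sum_{i_2,\ldots,i_m=1}^n a_{ii_2\ldots i_m}x_{i_2}\cdots x_{i_m}$, $i\in[n]$. A tensor $\mathbb{A}\in T_{m,n}$ is a $P_0$ tensor if for every nonzero $x\in\mathbb{R}^n$ there exists $i\in[n]$ with $x_i\neq 0$ and $x_i(\mathbb{A}x^{m-1})_i\ge 0$. *)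

theory Defs
  imports Complex_Main "HOL-Library.Multiset"
begin

text \<open>A real tensor of order m and dimension n is represented as a function from
  index lists to reals; only lists of length m with entries in [n] = {1..n} are relevant.\<close>

definition tensor_indices :: "nat \<Rightarrow> nat \<Rightarrow> nat list set" where
  "tensor_indices m n = {is. length is = m \<and> set is \<subseteq> {1..n}}"

definition tensor_nonzero :: "nat \<Rightarrow> nat \<Rightarrow> (nat list \<Rightarrow> real) \<Rightarrow> bool" where
  "tensor_nonzero m n A \<longleftrightarrow> (\<exists>is \<in> tensor_indices m n. A is \<noteq> 0)"

definition tensor_symmetric :: "nat \<Rightarrow> nat \<Rightarrow> (nat list \<Rightarrow> real) \<Rightarrow> bool" where
  "tensor_symmetric m n A \<longleftrightarrow>
     (\<forall>is \<in> tensor_indices m n. \<forall>js. mset js = mset is \<longrightarrow> A js = A is)"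

definition tensor_apply :: "nat \<Rightarrow> nat \<Rightarrow> (nat list \<Rightarrow> real) \<Rightarrow> (nat \<Rightarrow> real) \<Rightarrow> nat \<Rightarrow> real" where
  "tensor_apply m n A x i =
     (\<Sum>js \<in> tensor_indices (m - 1) n. A (i # js) * (\<Prod>k<length js. x (js ! k)))"

definition P0_tensor :: "nat \<Rightarrow> nat \<Rightarrow> (nat list \<Rightarrow> real) \<Rightarrow> bool" where
  "P0_tensor m n A \<longleftrightarrow>
     (\<forall>x :: nat \<Rightarrow> real. (\<exists>i\<in>{1..n}. x i \<noteq> 0) \<longrightarrow>
        (\<exists>i\<in>{1..n}. x i \<noteq> 0 \<and> x i * tensor_apply m n A x i \<ge> 0))"

end

theory Submission
  imports Defs
begin

theorem proposition2p3:
  shows "\<exists>(m::nat) (n::nat) (A :: nat list \<Rightarrow> real).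
           odd m \<and> m \<ge> 3 \<and> n \<ge> 1 \<and> tensor_nonzero m n A \<and>
           \<not> tensor_symmetric m n A \<and> P0_tensor m n A"
proof -
  define A :: "nat list \<Rightarrow> real" where "A = (\<lambda>is. if is = [1,2,2] then 1 else 0)"
  have nz: "tensor_nonzero 3 2 A"
    unfolding tensor_nonzero_def tensor_indices_def A_def
    by (rule bexI[of _ "[1,2,2]"]) auto
  have ns: "\<not> tensor_symmetric 3 2 A"
    unfolding tensor_symmetric_def tensor_indices_def A_def
    apply (simp only: Ball_def not_all)
    apply (rule exI[of _ "[1,2,2]"])
    apply (simp)
    apply (rule exI[of _ "[2,1,2]"])
    by simp
  have p0: "P0_tensor 3 2 A"
    unfolding P0_tensor_def
  proof (intro allI impI)
    fix x :: "nat \<Rightarrow> real"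
    assume ex: "\<exists>i\<in>{1..2}. x i \<noteq> 0"
    show "\<exists>i\<in>{1..2}. x i \<noteq> 0 \<and> 0 \<le> x i * tensor_apply 3 2 A x i"
    proof (cases "x 2 = 0")
      case True
      then have x1: "x 1 \<noteq> 0"
      proof -
        obtain i where "i \<in> {1..2}" "x i \<noteq> 0" using ex by blast
        then have "i = 1 \<or> i = 2" by auto
        then show ?thesis using True \<open>x i \<noteq> 0\<close> by auto
      qed
      have "tensor_apply 3 2 A x 1 = 0"
        unfolding tensor_apply_def
        by (rule sum.neutral) (auto simp: A_def True lessThan_Suc)
      then show ?thesis using x1 by (intro bexI[of _ 1]) auto
    next
      case False
      have "tensor_apply 3 2 A x 2 = 0"
        unfolding tensor_apply_def
        by (rule sum.neutral) (auto simp: A_def)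
      then show ?thesis using False by (intro bexI[of _ 2]) auto
    qed
  qed
  show ?thesis
    by (rule exI[of _ 3], rule exI[of _ 2], rule exI[of _ A]) (use nz ns p0 in auto)
qed

end
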